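(* Consider either (a) the maxface obtained from a reflexive symmetric zigzag of genus $p$, or (b) the maxface obtained from a reflexive symmetric tweezer of genus $p$ whose data satisfy $t_{-j}=-t_j$ for all $j$. Write, on the sheet over the upper half-plane, $g=\frac{e^{\pm i\pi/4}}{c}\prod_{j=-p}^p(z-t_j)^{a_j}$, $dh=c\,dz$, let $G(z)=\frac1{c^2}\prod_{j=-p}^p(z-t_j)^{2a_j}$ and $A(z)=\frac{g'(z)}{c\,g(z)}$. Suppose $G'\neq0$ on every loop $C_k$ of the singular set. Then on each such loop $C_k$: (1) there are at least two points $z$ with $\mathrm{Re}\,A(z)=0$ and $\mathrm{Im}\,A(z)\neq0$; (2) there are at least two points $z$ with $\mathrm{Re}\,A(z)\neq0$ and $\mathrm{Im}\,A(z)=0$.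
   Context: The region is the image of the closed upper half-plane under a Schwarz–Christoffel map $F(z)=\int_i^z\prod_{j=-p}^p(t-t_j)^{a_j}dt$ with real $t_{-p}<\dots<t_p$ mapped to the vertices $P_{-p},\dots,P_p$ and $a_j\in\{\pm\frac12\}$. Zigzag of genus $p$: open properly embedded arc in $\mathbb{C}$ of alternating horizontal/vertical segments with $2p+1$ vertices, angles $\pi/2,3\pi/2,\dots,\pi/2$ between consecutive sides, symmetric about $y=x$; for it the $a_j$ alternate in sign starting at $a_{-p}=-\frac12$ and $t_{-j}=-t_j$. Tweezer of genus $p\ge2$: arc of alternating horizontal/vertical edges with vertices $P_{-p},\dots,P_p$ whose interior angles (on the left going from $P_p$ to $P_{-p}$) alternate $3\pi/2,\pi/2$ except that they equal $\pi/2$ at $P_{\pm1}$ and, at $P_0$, $\pi/2$ if $p$ even and $3\pi/2$ if $p$ odd, symmetric about $y=-x$; the exponents $a_j$ correspond to these angles (angle $(a_j+1)\pi$). Reflexive: there is a conformal map from the upper half-plane model of one complementary region to that of the other sending vertex $P_j$ to $P_{-j}$. In each case the maxface lives on the hyperelliptic double cover of the doubled region branched at the $t_j$ and $\infty$, with Weierstrass data $(g,dh)$ as in the claim on one sheet and extended by symmetry, $c$ a nonzero constant; its singular set is $\{|g|=1\}$, whose connected components are called loops $C_k$. *)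

theory Defs
  imports "HOL-Complex_Analysis.Complex_Analysis"
begin

text \<open>Indices j range over {-p..p}. The exponent a_j is encoded as e j / 2 with e j in {1,-1}.\<close>

definition idx :: "nat \<Rightarrow> int set" where
  "idx p = {- int p .. int p}"

text \<open>Schwarz-Christoffel integrand (principal branches, continuous on the closed upper half-plane)
  and the map F(z) = integral from i to z (along the segment).\<close>

definition SC_f :: "nat \<Rightarrow> (int \<Rightarrow> real) \<Rightarrow> (int \<Rightarrow> int) \<Rightarrow> complex \<Rightarrow> complex" where
  "SC_f p t e z = (\<Prod>j\<in>idx p. (z - of_real (t j)) powr (of_int (e j) / 2))"

definition SC_F :: "nat \<Rightarrow> (int \<Rightarrow> real) \<Rightarrow> (int \<Rightarrow> int) \<Rightarrow> complex \<Rightarrow> complex" where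
  "SC_F p t e z = contour_integral (linepath \<i> z) (SC_f p t e)"

definition prevertices_ok :: "nat \<Rightarrow> (int \<Rightarrow> real) \<Rightarrow> bool" where
  "prevertices_ok p t \<longleftrightarrow>
     (\<forall>i\<in>idx p. \<forall>j\<in>idx p. i < j \<longrightarrow> t i < t j) \<and> (\<forall>j\<in>idx p. t (- j) = - t j)"

text \<open>The boundary arc F(R) is, after a similarity x \<mapsto> alpha x + beta, an open properly embedded
  arc whose sides are horizontal or vertical, symmetric about the line y = x (sigma = 1)
  or y = -x (sigma = -1); the reflection in y = sigma x is z \<mapsto> sigma i conj z.\<close>

definition rect_arc_sym :: "nat \<Rightarrow> (int \<Rightarrow> real) \<Rightarrow> (int \<Rightarrow> int) \<Rightarrow> complex \<Rightarrow> bool" where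
  "rect_arc_sym p t e \<sigma> \<longleftrightarrow>
     (\<exists>\<alpha> \<beta>. \<alpha> \<noteq> 0 \<and>
        (let P = (\<lambda>x::real. \<alpha> * SC_F p t e (of_real x) + \<beta>) in
           inj P \<and> continuous_on UNIV P \<and>
           filterlim (\<lambda>x. norm (P x)) at_top at_top \<and>
           filterlim (\<lambda>x. norm (P x)) at_top at_bot \<and>
           (\<forall>x. x \<notin> t ` idx p \<longrightarrow>
               Re (\<alpha> * SC_f p t e (of_real x)) = 0 \<or> Im (\<alpha> * SC_f p t e (of_real x)) = 0) \<and>
           (\<forall>x. \<exists>y. P y = \<sigma> * \<i> * cnj (P x))))"

text \<open>Reflexivity: a conformal bijection from the region F(open UHP) onto the other complementary
  region of the arc, extending continuously to the boundary and sending P_j to P_{-j}.\<close>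

definition reflexive :: "nat \<Rightarrow> (int \<Rightarrow> real) \<Rightarrow> (int \<Rightarrow> int) \<Rightarrow> bool" where
  "reflexive p t e \<longleftrightarrow>
     (let R1 = SC_F p t e ` {z. Im z > 0};
          R2 = - (SC_F p t e ` {z. Im z \<ge> 0}) in
      \<exists>\<phi>. \<phi> holomorphic_on R1 \<and> bij_betw \<phi> R1 R2 \<and> continuous_on (closure R1) \<phi> \<and>
          (\<forall>j\<in>idx p. \<phi> (SC_F p t e (of_real (t j))) = SC_F p t e (of_real (t (- j)))))"

text \<open>Exponents: zigzag a_j alternate starting with a_{-p} = -1/2.
  Tweezer: angle 3pi/2 (a = 1/2) / pi/2 (a = -1/2) alternating from P_p (3pi/2),
  except pi/2 at P_{\<plusminus>1}, and at P_0: pi/2 if p even, 3pi/2 if p odd.\<close>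

definition zigzag_exp :: "nat \<Rightarrow> int \<Rightarrow> int" where
  "zigzag_exp p j = (if even (j + int p) then -1 else 1)"

definition tweezer_exp :: "nat \<Rightarrow> int \<Rightarrow> int" where
  "tweezer_exp p j =
     (if j = 0 then (if even p then -1 else 1)
      else if \<bar>j\<bar> = 1 then -1
      else if even (int p - j) then 1 else -1)"

definition reflexive_symmetric_zigzag :: "nat \<Rightarrow> (int \<Rightarrow> real) \<Rightarrow> (int \<Rightarrow> int) \<Rightarrow> bool" where
  "reflexive_symmetric_zigzag p t e \<longleftrightarrow>
     (\<forall>j\<in>idx p. e j = zigzag_exp p j) \<and> prevertices_ok p t \<and>
     rect_arc_sym p t e 1 \<and> reflexive p t e"

definition reflexive_symmetric_tweezer :: "nat \<Rightarrow> (int \<Rightarrow> real) \<Rightarrow> (int \<Rightarrow> int) \<Rightarrow> bool" where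
  "reflexive_symmetric_tweezer p t e \<longleftrightarrow>
     p \<ge> 2 \<and> (\<forall>j\<in>idx p. e j = tweezer_exp p j) \<and> prevertices_ok p t \<and>
     rect_arc_sym p t e (-1) \<and> reflexive p t e"

text \<open>G(z) = c^{-2} prod (z - t_j)^{2 a_j} and A(z) = g'(z)/(c g(z)) = c^{-1} sum a_j/(z - t_j).\<close>

definition Gfun :: "nat \<Rightarrow> (int \<Rightarrow> real) \<Rightarrow> (int \<Rightarrow> int) \<Rightarrow> complex \<Rightarrow> complex \<Rightarrow> complex" where
  "Gfun p t e c z = (1 / c^2) * (\<Prod>j\<in>idx p. (z - of_real (t j)) powi (e j))"

definition Afun :: "nat \<Rightarrow> (int \<Rightarrow> real) \<Rightarrow> (int \<Rightarrow> int) \<Rightarrow> complex \<Rightarrow> complex \<Rightarrow> complex" where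
  "Afun p t e c z = (1 / c) * (\<Sum>j\<in>idx p. (of_int (e j) / 2) / (z - of_real (t j)))"

text \<open>Singular set {|g| = 1} = {|G| = 1} (|g|^2 = |G|), in the z-coordinate; loops are its
  connected components.\<close>

definition sing_set :: "nat \<Rightarrow> (int \<Rightarrow> real) \<Rightarrow> (int \<Rightarrow> int) \<Rightarrow> complex \<Rightarrow> complex set" where
  "sing_set p t e c = {z. z \<notin> of_real ` t ` idx p \<and> cmod (Gfun p t e c z) = 1}"

end

theory Submission
  imports Defs
begin

lemma core_arc:
  fixes G :: "complex \<Rightarrow> complex"
  assumes U: "open U" and hol: "G holomorphic_on U" and z0: "z0 \<in> U" "cmod (G z0) = 1"
    and d: "deriv G z0 \<noteq> 0"
  obtains \<epsilon> \<gamma> where "\<epsilon> > 0" "\<gamma> 0 = z0"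
    "\<And>s. \<bar>s\<bar> < \<epsilon> \<Longrightarrow> \<gamma> s \<in> connected_component_set {z\<in>U. cmod (G z) = 1} z0"
    "(\<gamma> has_vector_derivative (\<i> * G z0 / deriv G z0)) (at 0)"
    "\<gamma> (\<epsilon>/2) \<noteq> z0"
proof -
  obtain r where r: "r>0" "ball z0 r \<subseteq> U" "open (G ` ball z0 r)" "inj_on G (ball z0 r)"
    using has_complex_derivative_locally_invertible[OF hol z0(1) U d] by blast
  have holB: "G holomorphic_on ball z0 r" using hol r holomorphic_on_subset by blast
  obtain g where g: "g holomorphic_on G ` ball z0 r"
    "\<And>z. z\<in>ball z0 r \<Longrightarrow> deriv G z * deriv g (G z) = 1"
    "\<And>z. z \<in> ball z0 r \<Longrightarrow> g (G z) = z"
    using holomorphic_has_inverse[OF holB open_ball r(4)] by blast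
  define V where "V = G ` ball z0 r"
  define w0 where "w0 = G z0"
  have z0B: "z0 \<in> ball z0 r" using r by simp
  have w0V: "w0 \<in> V" unfolding V_def w0_def using z0B by blast
  have oV: "open V" using r V_def by simp
  have gV: "\<And>w. w \<in> V \<Longrightarrow> g w \<in> ball z0 r \<and> G (g w) = w"
    unfolding V_def using g(3) by auto
  have w0n: "cmod w0 = 1" using z0 w0_def by simp
  have "((\<lambda>s::real. w0 * exp(\<i> * of_real s)) \<longlongrightarrow> w0 * exp(\<i> * of_real 0)) (at 0)"
    by (intro tendsto_intros)
  then have "((\<lambda>s::real. w0 * exp(\<i> * of_real s)) \<longlongrightarrow> w0) (at 0)" by simp
  then have "eventually (\<lambda>s. w0 * exp(\<i> * of_real s) \<in> V) (at (0::real))"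
    using topological_tendstoD[OF _ oV w0V] by blast
  then obtain d0 where d0: "d0 > 0" "\<And>s. s \<noteq> 0 \<Longrightarrow> dist s 0 < d0 \<Longrightarrow> w0 * exp(\<i> * of_real s) \<in> V"
    unfolding eventually_at by blast
  define \<epsilon> where "\<epsilon> = min d0 1"
  have \<epsilon>: "\<epsilon> > 0" "\<epsilon> \<le> 1" using d0 by (auto simp: \<epsilon>_def)
  have inV: "w0 * exp(\<i> * of_real s) \<in> V" if "\<bar>s\<bar> < \<epsilon>" for s
  proof (cases "s = 0")
    case True then show ?thesis using w0V by simp
  next
    case False then show ?thesis using d0 that by (auto simp: \<epsilon>_def)
  qed
  define \<gamma> where "\<gamma> s = g (w0 * exp(\<i> * of_real s))" for s :: real
  have g0: "\<gamma> 0 = z0" unfolding \<gamma>_def w0_def using g(3) z0B by simp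
  have contg: "continuous_on V g" using g(1) V_def holomorphic_on_imp_continuous_on by blast
  have cont: "continuous_on {-\<epsilon><..<\<epsilon>} \<gamma>"
    unfolding \<gamma>_def
    apply (rule continuous_on_compose2[OF contg])
      apply (intro continuous_intros)
    using inV by auto
  define C where "C = \<gamma> ` {-\<epsilon><..<\<epsilon>}"
  have conC: "connected C" unfolding C_def
    by (rule connected_continuous_image[OF cont connected_Ioo])
  have CS: "C \<subseteq> {z\<in>U. cmod (G z) = 1}"
  proof
    fix z assume "z \<in> C"
    then obtain s where s0: "s \<in> {-\<epsilon><..<\<epsilon>}" "z = \<gamma> s" unfolding C_def by blast
    then have s: "\<bar>s\<bar> < \<epsilon>" "z = \<gamma> s" by auto
    have "w0 * exp(\<i> * of_real s) \<in> V" using inV s by simp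
    from gV[OF this] have "z \<in> ball z0 r" "G z = w0 * exp(\<i> * of_real s)"
      using s by (auto simp: \<gamma>_def)
    then show "z \<in> {z\<in>U. cmod (G z) = 1}" using r(2) w0n by (auto simp: norm_mult)
  qed
  have z0C: "z0 \<in> C" unfolding C_def using g0 \<epsilon> by force
  have CK: "C \<subseteq> connected_component_set {z\<in>U. cmod (G z) = 1} z0"
    by (rule connected_component_maximal[OF z0C conC CS])
  have inK: "\<gamma> s \<in> connected_component_set {z\<in>U. cmod (G z) = 1} z0" if "\<bar>s\<bar> < \<epsilon>" for s
  proof -
    have "s \<in> {-\<epsilon><..<\<epsilon>}" using that by (auto simp: abs_less_iff)
    then show ?thesis using CK unfolding C_def by blast
  qed
  have dg: "(g has_field_derivative deriv g w0) (at w0)"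
    using holomorphic_derivI[OF g(1) r(3)] w0V V_def by blast
  have dgv: "deriv g w0 = 1 / deriv G z0" using g(2)[OF z0B] d unfolding w0_def
    by (simp add: field_simps)
  have dexp: "((\<lambda>\<zeta>. w0 * exp(\<i> * \<zeta>)) has_field_derivative (w0 * \<i>)) (at (of_real 0))"
    by (auto intro!: derivative_eq_intros)
  have "((\<lambda>\<zeta>. g (w0 * exp(\<i> * \<zeta>))) has_field_derivative deriv g w0 * (w0 * \<i>)) (at (of_real 0))"
    using DERIV_chain2[of g, OF _ dexp] dg by simp
  from has_vector_derivative_real_field[OF this]
  have hv: "(\<gamma> has_vector_derivative deriv g w0 * (w0 * \<i>)) (at 0)"
    unfolding \<gamma>_def by simp
  have eq: "deriv g w0 * (w0 * \<i>) = \<i> * G z0 / deriv G z0" using dgv w0_def by simp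
  have "(\<gamma> has_vector_derivative (\<i> * G z0 / deriv G z0)) (at 0)"
    using hv unfolding eq .
  moreover have "\<gamma> (\<epsilon>/2) \<noteq> z0"
  proof
    assume h: "\<gamma> (\<epsilon>/2) = z0"
    have "\<bar>\<epsilon>/2\<bar> < \<epsilon>" using \<epsilon> by simp
    from gV[OF inV[OF this]] have "G (\<gamma> (\<epsilon>/2)) = w0 * exp(\<i> * of_real (\<epsilon>/2))"
      by (simp add: \<gamma>_def)
    then have "w0 * exp(\<i> * of_real (\<epsilon>/2)) = w0 * 1" using h w0_def by simp
    then have e1: "exp(\<i> * of_real (\<epsilon>/2)) = 1" using w0n by (metis mult_left_cancel norm_zero zero_neq_one)
    have "sin (\<epsilon>/2) > 0" using \<epsilon> pi_gt3 by (intro sin_gt_zero) auto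
    moreover have "Im (exp(\<i> * of_real (\<epsilon>/2))) = sin (\<epsilon>/2)" by (simp add: Im_exp)
    ultimately show False using e1 by simp
  qed
  ultimately show ?thesis using that \<epsilon> g0 inK by blast
qed

lemma core_max:
  fixes G :: "complex \<Rightarrow> complex"
  assumes U: "open U" and hol: "G holomorphic_on U" and z0: "z0 \<in> U" "cmod (G z0) = 1"
    and d: "deriv G z0 \<noteq> 0"
    and mx: "\<forall>z\<in>connected_component_set {z\<in>U. cmod (G z) = 1} z0. Re (\<omega> * z) \<le> Re (\<omega> * z0)"
  shows "Re (\<omega> * (\<i> * G z0 / deriv G z0)) = 0"
proof -
  obtain \<epsilon> \<gamma> where a: "\<epsilon> > 0" "\<gamma> 0 = z0"
    "\<And>s. \<bar>s\<bar> < \<epsilon> \<Longrightarrow> \<gamma> s \<in> connected_component_set {z\<in>U. cmod (G z) = 1} z0"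
    "(\<gamma> has_vector_derivative (\<i> * G z0 / deriv G z0)) (at 0)"
    using core_arc[OF U hol z0 d] by blast
  have "((\<lambda>s. Re (\<omega> * \<gamma> s)) has_field_derivative Re (\<omega> * (\<i> * G z0 / deriv G z0))) (at 0)"
    by (intro has_field_derivative_Re has_vector_derivative_mult_right a(4))
  moreover have "\<forall>y. \<bar>0 - y\<bar> < \<epsilon> \<longrightarrow> Re (\<omega> * \<gamma> y) \<le> Re (\<omega> * \<gamma> 0)"
    using mx a(2,3) by auto
  ultimately show ?thesis by (rule DERIV_local_max[OF _ a(1)])
qed

lemma core_two:
  fixes G :: "complex \<Rightarrow> complex"
  assumes U: "open U" and hol: "G holomorphic_on U"
    and cpt: "compact {z\<in>U. cmod (G z) = 1}"
    and d: "\<forall>z\<in>{z\<in>U. cmod (G z) = 1}. deriv G z \<noteq> 0"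
    and z0: "z0 \<in> {z\<in>U. cmod (G z) = 1}"
  shows "\<exists>z1 z2. z1 \<noteq> z2 \<and> z1 \<in> connected_component_set {z\<in>U. cmod (G z) = 1} z0
     \<and> z2 \<in> connected_component_set {z\<in>U. cmod (G z) = 1} z0
     \<and> Re (\<omega> * (\<i> * G z1 / deriv G z1)) = 0 \<and> Re (\<omega> * (\<i> * G z2 / deriv G z2)) = 0"
proof -
  define S where "S = {z\<in>U. cmod (G z) = 1}"
  define K where "K = connected_component_set S z0"
  have cK: "compact K" unfolding K_def
    using cpt S_def by (metis closed_connected_component compact_eq_bounded_closed
        bounded_subset connected_component_subset)
  have neK: "K \<noteq> {}" using z0 unfolding S_def K_def by (metis connected_component_eq_empty)
  have ct: "continuous_on K (\<lambda>z. Re (w * z))" for w by (intro continuous_intros)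
  have KS: "K \<subseteq> S" unfolding K_def by (rule connected_component_subset)
  have propz: "Re (\<omega> * (\<i> * G z / deriv G z)) = 0"
    if zK: "z \<in> K" and mx: "\<forall>y\<in>K. Re (w * y) \<le> Re (w * z)" and w: "w = \<omega> \<or> w = - \<omega>" for z w
  proof -
    have zS: "z \<in> S" using zK KS by auto
    have KK: "connected_component_set S z = K" unfolding K_def
      using connected_component_eq zK K_def by blast
    have "Re (w * (\<i> * G z / deriv G z)) = 0"
      apply (rule core_max[OF U hol])
      using zS d mx KK unfolding S_def by auto
    then show ?thesis using w by auto
  qed
  obtain a where a: "a \<in> K" "\<forall>y\<in>K. Re (\<omega> * y) \<le> Re (\<omega> * a)"
    using continuous_attains_sup[OF cK neK ct] by blast
  obtain b where b: "b \<in> K" "\<forall>y\<in>K. Re (-\<omega> * y) \<le> Re (-\<omega> * b)"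
    using continuous_attains_sup[OF cK neK ct] by blast
  have main: "\<exists>z1 z2. z1 \<noteq> z2 \<and> z1 \<in> K \<and> z2 \<in> K
     \<and> Re (\<omega> * (\<i> * G z1 / deriv G z1)) = 0 \<and> Re (\<omega> * (\<i> * G z2 / deriv G z2)) = 0"
  proof (cases "a = b")
    case False
    show ?thesis
      apply (rule exI[of _ a], rule exI[of _ b])
      using False propz[OF a disjI1[OF refl]] propz[OF b disjI2[OF refl]] a(1) b(1) by simp
  next
    case True
    have eqa: "Re (\<omega> * y) = Re (\<omega> * a)" if "y \<in> K" for y
    proof -
      have "Re (-\<omega> * y) \<le> Re (-\<omega> * a)" using b that True by simp
      then have "Re (\<omega> * a) \<le> Re (\<omega> * y)" by simp
      moreover have "Re (\<omega> * y) \<le> Re (\<omega> * a)" using a that by simp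
      ultimately show ?thesis by linarith
    qed
    have allK: "\<forall>y\<in>K. Re (\<omega> * y) \<le> Re (\<omega> * z)" if "z \<in> K" for z
      using eqa that by simp
    have aS: "a \<in> S" using a KS by auto
    have aU: "a \<in> U" "cmod (G a) = 1" "deriv G a \<noteq> 0" using aS d unfolding S_def by auto
    obtain \<epsilon> :: real and \<gamma> where e: "\<epsilon> > 0"
      "\<And>s. \<bar>s\<bar> < \<epsilon> \<Longrightarrow> \<gamma> s \<in> connected_component_set {z\<in>U. cmod (G z) = 1} a" "\<gamma> (\<epsilon>/2) \<noteq> a"
      using core_arc[OF U hol aU] by blast
    have KK: "connected_component_set S a = K" unfolding K_def
      using connected_component_eq a K_def by blast
    have gK: "\<gamma> (\<epsilon>/2) \<in> K" using e(1) e(2)[of "\<epsilon>/2"] KK unfolding S_def by simp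
    show ?thesis
      apply (rule exI[of _ a], rule exI[of _ "\<gamma> (\<epsilon>/2)"])
      using propz[OF a(1) allK[OF a(1)] disjI1[OF refl]] propz[OF gK allK[OF gK] disjI1[OF refl]] e(3) a(1) gK
      by simp
  qed
  then show ?thesis unfolding K_def S_def .
qed

lemma real_bound1:
  fixes x k X Y :: real and a b :: nat
  assumes x: "x \<ge> 1" and ab: "a > b" and k: "k > 0"
    and h: "(x/2)^a \<le> k * (2*x)^b"
  shows "x \<le> k * 2^(a+b)"
proof -
  have xb: "x^b > 0" using x by simp
  have "x \<le> x^(a-b)" using x ab by (metis One_nat_def power_increasing power_one_right zero_less_diff less_one not_less Suc_leI)
  then have "x * x^b \<le> x^(a-b) * x^b" using xb by (simp add: mult_right_mono)
  also have "\<dots> = x^a" using ab by (simp add: power_add[symmetric])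
  also have "\<dots> = (x/2)^a * 2^a" by (simp add: power_divide)
  also have "\<dots> \<le> k * (2*x)^b * 2^a" using h by (simp add: mult_right_mono)
  also have "\<dots> = (k * 2^(a+b)) * x^b" by (simp add: power_mult_distrib power_add)
  finally show ?thesis using xb by simp
qed

lemma real_bound:
  fixes x k X Y :: real and a b :: nat
  assumes x: "x \<ge> 1" and ab: "a \<noteq> b" and k: "k > 0" and XY: "X = k * Y"
    and h1: "(x/2)^a \<le> X" "X \<le> (2*x)^a" and h2: "(x/2)^b \<le> Y" "Y \<le> (2*x)^b"
  shows "x \<le> (k + 1/k) * 2^(a+b)"
proof (cases "a > b")
  case True
  have "(x/2)^a \<le> k * (2*x)^b" using h1 h2 XY k by (metis order_trans mult_left_mono less_imp_le)
  from real_bound1[OF x True k this] have "x \<le> k * 2^(a+b)" .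
  moreover have "k * 2^(a+b) \<le> (k + 1/k) * 2^(a+b)" using k by (simp add: mult_right_mono)
  ultimately show ?thesis by linarith
next
  case False
  then have ba: "b > a" using ab by simp
  have "k * (x/2)^b \<le> (2*x)^a" using h1 h2 XY k by (metis order_trans mult_left_mono less_imp_le)
  then have "(x/2)^b \<le> (1/k) * (2*x)^a" using k by (simp add: field_simps)
  from real_bound1[OF x ba _ this] k have "x \<le> (1/k) * 2^(b+a)" by simp
  moreover have "(1/k) * 2^(b+a) \<le> (k + 1/k) * 2^(a+b)"
  proof -
    have "(1/k) * 2^(b+a) = (1/k) * 2^(a+b)" by (simp add: add.commute)
    also have "\<dots> \<le> (k + 1/k) * 2^(a+b)" using k by (intro mult_right_mono) auto
    finally show ?thesis .
  qed
  ultimately show ?thesis by linarith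
qed


lemma prod_bounds:
  fixes t :: "int \<Rightarrow> real" and z :: complex
  assumes fac: "\<And>j. j \<in> A \<Longrightarrow> x/2 \<le> cmod (z - of_real (t j)) \<and> cmod (z - of_real (t j)) \<le> 2*x"
    and x: "x \<ge> 0"
  shows "(x/2)^card A \<le> cmod (\<Prod>j\<in>A. (z - of_real (t j)))"
        "cmod (\<Prod>j\<in>A. (z - of_real (t j))) \<le> (2*x)^card A"
proof -
  have "(x/2)^card A = (\<Prod>j\<in>A. x/2)" by simp
  also have "\<dots> \<le> (\<Prod>j\<in>A. cmod (z - of_real (t j)))"
    using fac x by (intro prod_mono) auto
  finally show "(x/2)^card A \<le> cmod (\<Prod>j\<in>A. (z - of_real (t j)))" by (simp add: prod_norm)
  have "(\<Prod>j\<in>A. cmod (z - of_real (t j))) \<le> (\<Prod>j\<in>A. 2*x)"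
    using fac by (intro prod_mono) auto
  then show "cmod (\<Prod>j\<in>A. (z - of_real (t j))) \<le> (2*x)^card A" by (simp add: prod_norm)
qed

lemma bounded_eq:
  fixes t :: "int \<Rightarrow> real"
  assumes fin: "finite Jp" "finite Jm" and card: "card Jp \<noteq> card Jm" and k: "k > 0"
  shows "bounded {z::complex. cmod (\<Prod>j\<in>Jp. (z - of_real (t j))) = k * cmod (\<Prod>j\<in>Jm. (z - of_real (t j)))}"
proof -
  define M where "M = (\<Sum>j\<in>Jp\<union>Jm. \<bar>t j\<bar>) + 1"
  have tM: "\<bar>t j\<bar> \<le> M - 1" if "j \<in> Jp \<union> Jm" for j
  proof -
    have "\<bar>t j\<bar> \<le> (\<Sum>j\<in>Jp\<union>Jm. \<bar>t j\<bar>)"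
      using that fin by (intro member_le_sum) auto
    then show ?thesis by (simp add: M_def)
  qed
  have M1: "M \<ge> 1" unfolding M_def by (simp add: sum_nonneg)
  define B where "B = max (2*M) ((k + 1/k) * 2^(card Jp + card Jm))"
  show ?thesis unfolding bounded_iff
  proof (intro exI ballI)
    fix z assume z: "z \<in> {z::complex. cmod (\<Prod>j\<in>Jp. (z - of_real (t j))) = k * cmod (\<Prod>j\<in>Jm. (z - of_real (t j)))}"
    show "norm z \<le> B"
    proof (cases "norm z \<le> 2*M")
      case True then show ?thesis by (simp add: B_def)
    next
      case False
      define x where "x = norm z"
      have x1: "x \<ge> 1" using False M1 x_def by simp
      have fac: "x/2 \<le> cmod (z - of_real (t j)) \<and> cmod (z - of_real (t j)) \<le> 2*x" if "j \<in> Jp \<union> Jm" for j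
      proof -
        have tj: "\<bar>t j\<bar> \<le> x/2" using tM[OF that] False x_def by simp
        have "cmod (of_real (t j) :: complex) = \<bar>t j\<bar>" by simp
        moreover have "norm z - cmod (of_real (t j) :: complex) \<le> cmod (z - of_real (t j))"
          by (rule norm_triangle_ineq2)
        moreover have "cmod (z - of_real (t j)) \<le> norm z + cmod (of_real (t j) :: complex)"
          by (rule norm_triangle_ineq4)
        ultimately show ?thesis using tj x_def by simp
      qed
      have bp: "(x/2)^card Jp \<le> cmod (\<Prod>j\<in>Jp. (z - of_real (t j)))"
               "cmod (\<Prod>j\<in>Jp. (z - of_real (t j))) \<le> (2*x)^card Jp"
        using prod_bounds[of Jp x z t] fac x1 by auto
      have bm: "(x/2)^card Jm \<le> cmod (\<Prod>j\<in>Jm. (z - of_real (t j)))"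
               "cmod (\<Prod>j\<in>Jm. (z - of_real (t j))) \<le> (2*x)^card Jm"
        using prod_bounds[of Jm x z t] fac x1 by auto
      have "x \<le> (k + 1/k) * 2^(card Jp + card Jm)"
        using real_bound[OF x1 card k _ bp bm] z by simp
      then show ?thesis by (simp add: B_def x_def)
    qed
  qed
qed


lemma prod_powi_deriv:
  fixes a :: "int \<Rightarrow> complex"
  assumes "finite I" "\<forall>j\<in>I. z \<noteq> a j"
  shows "((\<lambda>z. \<Prod>j\<in>I. (z - a j) powi n j) has_field_derivative
           (\<Prod>j\<in>I. (z - a j) powi n j) * (\<Sum>j\<in>I. of_int (n j) / (z - a j))) (at z)"
  using assms
proof (induction I rule: finite_induct)
  case empty
  then show ?case by simp
next
  case (insert x F)
  have zx: "z - a x \<noteq> 0" using insert by auto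
  have d1: "((\<lambda>z. (z - a x) powi n x) has_field_derivative
      (of_int (n x) * (z - a x) powi (n x - 1) * 1)) (at z)"
    using zx by (intro DERIV_power_int derivative_eq_intros) auto
  have d2: "((\<lambda>z. \<Prod>j\<in>F. (z - a j) powi n j) has_field_derivative
           (\<Prod>j\<in>F. (z - a j) powi n j) * (\<Sum>j\<in>F. of_int (n j) / (z - a j))) (at z)"
    using insert by auto
  have eq: "(z - a x) powi (n x - 1) = (z - a x) powi n x / (z - a x)"
    using zx by (simp add: power_int_diff)
  show ?case
    using DERIV_mult[OF d1 d2] insert(1,2) zx
    by (simp add: eq field_simps)
qed

lemma conv1:
  fixes s c :: complex assumes "s \<noteq> 0" "c \<noteq> 0" "Re (-\<i>*c*(\<i>*1/s)) = 0"
  shows "Re (s/(2*c)) = 0 \<and> Im (s/(2*c)) \<noteq> 0"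
proof -
  define A where "A = s/(2*c)"
  have A0: "A \<noteq> 0" using assms A_def by simp
  have eq: "-\<i>*c*(\<i>*1/s) = inverse (2*A)" using assms unfolding A_def by (simp add: field_simps)
  have "Re (inverse (2*A)) = 0" using assms(3) arg_cong[OF eq, of Re] by simp
  then have "Re (2*A) / ((Re (2*A))^2 + (Im (2*A))^2) = 0" by (simp only: inverse_complex.simps)
  then have "Re (2*A) = 0 \<or> ((Re (2*A))^2 + (Im (2*A))^2) = 0" by (simp only: divide_eq_0_iff)
  moreover have "(Re (2*A))^2 + (Im (2*A))^2 \<noteq> 0"
  proof -
    have "cmod (2*A) \<noteq> 0" using A0 by simp
    then show ?thesis by (metis cmod_power2 power_eq_0_iff)
  qed
  ultimately have "Re A = 0" by simp
  moreover then have "Im A \<noteq> 0" using A0 complex_eqI[of A 0] by auto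
  ultimately show ?thesis unfolding A_def by simp
qed
lemma conv2:
  fixes s c :: complex assumes "s \<noteq> 0" "c \<noteq> 0" "Re (c*(\<i>*1/s)) = 0"
  shows "Re (s/(2*c)) \<noteq> 0 \<and> Im (s/(2*c)) = 0"
proof -
  define A where "A = s/(2*c)"
  have A0: "A \<noteq> 0" using assms A_def by simp
  have eq: "c*(\<i>*1/s) = \<i> * inverse (2*A)" using assms unfolding A_def by (simp add: field_simps)
  have "Im (inverse (2*A)) = 0" using assms(3) arg_cong[OF eq, of Re] by simp
  then have "- Im (2*A) / ((Re (2*A))^2 + (Im (2*A))^2) = 0" by (simp only: inverse_complex.simps)
  then have "- Im (2*A) = 0 \<or> ((Re (2*A))^2 + (Im (2*A))^2) = 0" by (simp only: divide_eq_0_iff)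
  moreover have "(Re (2*A))^2 + (Im (2*A))^2 \<noteq> 0"
  proof -
    have "cmod (2*A) \<noteq> 0" using A0 by simp
    then show ?thesis by (metis cmod_power2 power_eq_0_iff)
  qed
  ultimately have "Im A = 0" by simp
  moreover then have "Re A \<noteq> 0" using A0 complex_eqI[of A 0] by auto
  ultimately show ?thesis unfolding A_def by simp
qed

lemma data_facts:
  assumes data: "reflexive_symmetric_zigzag p t e \<or> reflexive_symmetric_tweezer p t e"
  shows "\<forall>j\<in>idx p. e j = 1 \<or> e j = -1" "inj_on t (idx p)"
proof -
  have po: "prevertices_ok p t" using data
    unfolding reflexive_symmetric_zigzag_def reflexive_symmetric_tweezer_def by auto
  have z: "zigzag_exp p j = 1 \<or> zigzag_exp p j = -1" for j by (simp add: zigzag_exp_def)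
  have tw: "tweezer_exp p j = 1 \<or> tweezer_exp p j = -1" for j by (auto simp: tweezer_exp_def)
  show "\<forall>j\<in>idx p. e j = 1 \<or> e j = -1" using data z tw
    unfolding reflexive_symmetric_zigzag_def reflexive_symmetric_tweezer_def by metis
  show "inj_on t (idx p)"
  proof (rule inj_onI)
    fix i j assume ij: "i \<in> idx p" "j \<in> idx p" "t i = t j"
    show "i = j"
    proof (rule ccontr)
      assume "i \<noteq> j"
      then have "i < j \<or> j < i" by auto
      then show False using po ij unfolding prevertices_ok_def by force
    qed
  qed
qed

lemma Gfun_split:
  assumes E: "\<forall>j\<in>idx p. e j = 1 \<or> e j = -1"
  shows "Gfun p t e c z = (\<Prod>j\<in>{j\<in>idx p. e j = 1}. (z - of_real (t j)))
          * inverse (\<Prod>j\<in>{j\<in>idx p. e j \<noteq> 1}. (z - of_real (t j))) / c^2"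
proof -
  let ?I = "idx p" and ?P = "{j\<in>idx p. e j = 1}" and ?M = "{j\<in>idx p. e j \<noteq> 1}"
  have fin: "finite ?I" by (simp add: idx_def)
  have un: "?I = ?P \<union> ?M" by auto
  have "(\<Prod>j\<in>?I. (z - of_real (t j)) powi (e j))
        = (\<Prod>j\<in>?P. (z - of_real (t j)) powi (e j)) * (\<Prod>j\<in>?M. (z - of_real (t j)) powi (e j))"
    by (subst un, rule prod.union_disjoint) (use fin in auto)
  also have "(\<Prod>j\<in>?P. (z - of_real (t j)) powi (e j)) = (\<Prod>j\<in>?P. (z - of_real (t j)))"
    by (rule prod.cong) auto
  also have "(\<Prod>j\<in>?M. (z - of_real (t j)) powi (e j)) = (\<Prod>j\<in>?M. inverse (z - of_real (t j)))"
    by (rule prod.cong) (use E in \<open>auto simp: power_int_minus1_right\<close>)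
  also have "\<dots> = inverse (\<Prod>j\<in>?M. (z - of_real (t j)))"
    using prod_inversef[of "\<lambda>j. z - of_real (t j)" ?M] by (simp add: o_def)
  finally show ?thesis unfolding Gfun_def by (simp add: field_simps)
qed

lemma prod_zero_at:
  assumes "finite J" "inj_on t (idx p)" "J \<subseteq> idx p" "k \<in> idx p"
  shows "((\<Prod>j\<in>J. (of_real (t k) - of_real (t j) :: complex)) = 0) \<longleftrightarrow> k \<in> J"
proof -
  have "((\<Prod>j\<in>J. (of_real (t k) - of_real (t j) :: complex)) = 0) \<longleftrightarrow> (\<exists>j\<in>J. t k = t j)"
    using assms(1) by (simp add: prod_zero_iff)
  also have "\<dots> \<longleftrightarrow> k \<in> J" using assms(2-4) by (auto dest: inj_onD)
  finally show ?thesis .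
qed

theorem proposition7p2:
  fixes p :: nat and t :: "int \<Rightarrow> real" and e :: "int \<Rightarrow> int" and c :: complex
  assumes data: "reflexive_symmetric_zigzag p t e \<or> reflexive_symmetric_tweezer p t e"
    and c: "c \<noteq> 0"
    and G'_nz: "\<forall>z\<in>sing_set p t e c. deriv (Gfun p t e c) z \<noteq> 0"
  shows "\<forall>z0\<in>sing_set p t e c.
           (\<exists>z1 z2. z1 \<noteq> z2 \<and>
              z1 \<in> connected_component_set (sing_set p t e c) z0 \<and>
              z2 \<in> connected_component_set (sing_set p t e c) z0 \<and>
              Re (Afun p t e c z1) = 0 \<and> Im (Afun p t e c z1) \<noteq> 0 \<and>
              Re (Afun p t e c z2) = 0 \<and> Im (Afun p t e c z2) \<noteq> 0) \<and>
           (\<exists>z1 z2. z1 \<noteq> z2 \<and>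
              z1 \<in> connected_component_set (sing_set p t e c) z0 \<and>
              z2 \<in> connected_component_set (sing_set p t e c) z0 \<and>
              Re (Afun p t e c z1) \<noteq> 0 \<and> Im (Afun p t e c z1) = 0 \<and>
              Re (Afun p t e c z2) \<noteq> 0 \<and> Im (Afun p t e c z2) = 0)"
proof -
  note E = data_facts(1)[OF data] and inj = data_facts(2)[OF data]
  define I where "I = idx p"
  have finI: "finite I" by (simp add: I_def idx_def)
  define T where "T = (of_real :: real \<Rightarrow> complex) ` t ` I"
  define U where "U = - T"
  define G where "G = Gfun p t e c"
  define S where "S = sing_set p t e c"
  define \<sigma> where "\<sigma> z = (\<Sum>j\<in>I. of_int (e j) / (z - of_real (t j)))" for z :: complex
  define Jp where "Jp = {j\<in>I. e j = 1}"
  define Jm where "Jm = {j\<in>I. e j \<noteq> 1}"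
  have finJ: "finite Jp" "finite Jm" using finI by (auto simp: Jp_def Jm_def)
  have SU: "S = {z\<in>U. cmod (G z) = 1}" by (auto simp: S_def sing_set_def U_def T_def G_def I_def)
  have oU: "open U" unfolding U_def T_def using finI by (intro open_Compl finite_imp_closed) auto
  have notT: "\<forall>j\<in>I. z \<noteq> of_real (t j)" if "z \<in> U" for z using that by (auto simp: U_def T_def)
  have dG: "(G has_field_derivative G z * \<sigma> z) (at z)" if "z \<in> U" for z
  proof -
    have "((\<lambda>z. \<Prod>j\<in>I. (z - of_real (t j)) powi e j) has_field_derivative
           (\<Prod>j\<in>I. (z - of_real (t j)) powi e j) * (\<Sum>j\<in>I. of_int (e j) / (z - of_real (t j)))) (at z)"
      by (rule prod_powi_deriv[OF finI notT[OF that]])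
    from DERIV_cmult[OF this, of "1 / c^2"] show ?thesis
      unfolding G_def Gfun_def \<sigma>_def I_def by (simp add: mult.assoc)
  qed
  have hol: "G holomorphic_on U"
    unfolding holomorphic_on_def field_differentiable_def
    using dG has_field_derivative_at_within by blast
  have derivG: "deriv G z = G z * \<sigma> z" if "z \<in> U" for z
    using DERIV_imp_deriv[OF dG[OF that]] .
  define Pp where "Pp z = (\<Prod>j\<in>Jp. (z - of_real (t j)))" for z :: complex
  define Pm where "Pm z = (\<Prod>j\<in>Jm. (z - of_real (t j)))" for z :: complex
  have Gs: "G z = Pp z * inverse (Pm z) / c^2" for z
    using Gfun_split[OF E, of t c z] unfolding G_def Pp_def Pm_def Jp_def Jm_def I_def .
  have SE: "S = {z. cmod (Pp z) = cmod c ^ 2 * cmod (Pm z)}"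
  proof (intro set_eqI iffI)
    fix z assume "z \<in> S"
    then have zU: "z \<in> U" and G1: "cmod (G z) = 1" using SU by auto
    have "Pm z \<noteq> 0" using notT[OF zU] finJ(2) by (auto simp: Pm_def prod_zero_iff Jm_def)
    then show "z \<in> {z. cmod (Pp z) = cmod c ^ 2 * cmod (Pm z)}"
      using G1 c unfolding Gs by (simp add: norm_mult norm_divide norm_inverse norm_power field_simps)
  next
    fix z assume z: "z \<in> {z. cmod (Pp z) = cmod c ^ 2 * cmod (Pm z)}"
    have zU: "z \<in> U"
    proof (rule ccontr)
      assume "z \<notin> U"
      then obtain k where k: "k \<in> I" "z = of_real (t k)" by (auto simp: U_def T_def)
      have "k \<in> Jp \<or> k \<in> Jm" using k by (auto simp: Jp_def Jm_def)
      then show False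
      proof
        assume kp: "k \<in> Jp"
        have "Pp z = 0" using prod_zero_at[OF finJ(1) inj _ k(1)[unfolded I_def]] kp k(2)
          by (auto simp: Pp_def Jp_def I_def)
        then have "Pm z = 0" using z c by simp
        moreover have "Pm z \<noteq> 0" using prod_zero_at[OF finJ(2) inj _ k(1)[unfolded I_def]] kp k(2)
          by (auto simp: Pm_def Jp_def Jm_def I_def)
        ultimately show False by simp
      next
        assume km: "k \<in> Jm"
        have "Pm z = 0" using prod_zero_at[OF finJ(2) inj _ k(1)[unfolded I_def]] km k(2)
          by (auto simp: Pm_def Jm_def I_def)
        then have "Pp z = 0" using z by simp
        moreover have "Pp z \<noteq> 0" using prod_zero_at[OF finJ(1) inj _ k(1)[unfolded I_def]] km k(2)
          by (auto simp: Pp_def Jp_def Jm_def I_def)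
        ultimately show False by simp
      qed
    qed
    have "Pm z \<noteq> 0" using notT[OF zU] finJ(2) by (auto simp: Pm_def prod_zero_iff Jm_def)
    then have "cmod (G z) = 1" using z c unfolding Gs
      by (simp add: norm_mult norm_divide norm_inverse norm_power field_simps)
    then show "z \<in> S" using zU SU by simp
  qed
  have clS: "closed S" unfolding SE
    by (intro closed_Collect_eq continuous_intros) (auto simp: Pp_def Pm_def intro!: continuous_intros)
  have cardI: "card I = 2 * p + 1" by (simp add: I_def idx_def)
  have "card Jp + card Jm = card I"
  proof -
    have "I = Jp \<union> Jm" "Jp \<inter> Jm = {}" by (auto simp: Jp_def Jm_def)
    then show ?thesis using card_Un_disjoint[OF finJ] by simp
  qed
  then have cne: "card Jp \<noteq> card Jm" using cardI by presburger
  have bS: "bounded S" unfolding SE Pp_def Pm_def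
    by (rule bounded_eq[OF finJ cne]) (use c in simp)
  have cpt: "compact {z\<in>U. cmod (G z) = 1}" using clS bS SU compact_eq_bounded_closed by auto
  have dnz: "\<forall>z\<in>{z\<in>U. cmod (G z) = 1}. deriv G z \<noteq> 0" using G'_nz SU S_def G_def by auto
  have info: "\<sigma> z \<noteq> 0 \<and> \<i> * G z / deriv G z = \<i> * 1 / \<sigma> z \<and> Afun p t e c z = \<sigma> z / (2 * c)"
    if "z \<in> {z\<in>U. cmod (G z) = 1}" for z
  proof -
    have zU: "z \<in> U" and Gz: "G z \<noteq> 0" using that by auto
    have "deriv G z \<noteq> 0" using dnz that by auto
    then have s0: "\<sigma> z \<noteq> 0" using derivG[OF zU] by simp
    have "Afun p t e c z = (1/c) * (\<Sum>j\<in>I. of_int (e j) / (z - of_real (t j)) / 2)"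
      unfolding Afun_def I_def by (simp add: field_simps)
    also have "\<dots> = \<sigma> z / (2 * c)" unfolding \<sigma>_def sum_divide_distrib[symmetric] by simp
    finally show ?thesis using s0 Gz derivG[OF zU] by simp
  qed
  show ?thesis
  proof
    fix z0 assume "z0 \<in> sing_set p t e c"
    then have z0: "z0 \<in> {z\<in>U. cmod (G z) = 1}" using SU S_def by simp
    have SS: "sing_set p t e c = {z\<in>U. cmod (G z) = 1}" using SU S_def by simp
    have inS: "z \<in> {z\<in>U. cmod (G z) = 1}" if "z \<in> connected_component_set {z\<in>U. cmod (G z) = 1} z0" for z
      using that connected_component_subset by blast
    obtain a1 a2 where A: "a1 \<noteq> a2" "a1 \<in> connected_component_set {z\<in>U. cmod (G z) = 1} z0"
      "a2 \<in> connected_component_set {z\<in>U. cmod (G z) = 1} z0"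
      "Re ((-\<i>*c) * (\<i> * G a1 / deriv G a1)) = 0" "Re ((-\<i>*c) * (\<i> * G a2 / deriv G a2)) = 0"
      using core_two[OF oU hol cpt dnz z0, of "-\<i>*c"] by blast
    obtain b1 b2 where B: "b1 \<noteq> b2" "b1 \<in> connected_component_set {z\<in>U. cmod (G z) = 1} z0"
      "b2 \<in> connected_component_set {z\<in>U. cmod (G z) = 1} z0"
      "Re (c * (\<i> * G b1 / deriv G b1)) = 0" "Re (c * (\<i> * G b2 / deriv G b2)) = 0"
      using core_two[OF oU hol cpt dnz z0, of "c"] by blast
    have a1: "Re (Afun p t e c a1) = 0 \<and> Im (Afun p t e c a1) \<noteq> 0"
      using info[OF inS[OF A(2)]] A(4) conv1[OF _ c] by (metis mult.assoc)
    have a2: "Re (Afun p t e c a2) = 0 \<and> Im (Afun p t e c a2) \<noteq> 0"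
      using info[OF inS[OF A(3)]] A(5) conv1[OF _ c] by (metis mult.assoc)
    have b1: "Re (Afun p t e c b1) \<noteq> 0 \<and> Im (Afun p t e c b1) = 0"
      using info[OF inS[OF B(2)]] B(4) conv2[OF _ c] by metis
    have b2: "Re (Afun p t e c b2) \<noteq> 0 \<and> Im (Afun p t e c b2) = 0"
      using info[OF inS[OF B(3)]] B(5) conv2[OF _ c] by metis
    show "(\<exists>z1 z2. z1 \<noteq> z2 \<and>
              z1 \<in> connected_component_set (sing_set p t e c) z0 \<and>
              z2 \<in> connected_component_set (sing_set p t e c) z0 \<and>
              Re (Afun p t e c z1) = 0 \<and> Im (Afun p t e c z1) \<noteq> 0 \<and>
              Re (Afun p t e c z2) = 0 \<and> Im (Afun p t e c z2) \<noteq> 0) \<and>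
           (\<exists>z1 z2. z1 \<noteq> z2 \<and>
              z1 \<in> connected_component_set (sing_set p t e c) z0 \<and>
              z2 \<in> connected_component_set (sing_set p t e c) z0 \<and>
              Re (Afun p t e c z1) \<noteq> 0 \<and> Im (Afun p t e c z1) = 0 \<and>
              Re (Afun p t e c z2) \<noteq> 0 \<and> Im (Afun p t e c z2) = 0)"
      unfolding SS using A B a1 a2 b1 b2 by blast
  qed
qed

end
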